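(* Let $k\ge 3$ and let $p>3$ be a prime dividing $2k+1$. Then every root (in an algebraic closure of $\mathbb{F}_p$) of the reduction of $Q_{k-1}(q)$ modulo $p$, and hence of $P_{k-1}(q)$ modulo $p$, has multiplicity at most $4$. Consequently, for every $a\in\mathbb{F}_p$, $(x-a)^5$ does not divide $p_{k-1}(x)$ in $\mathbb{F}_p[x]$; in particular the exponents $n_a$ in any factorization $m_{k-1}(x)\equiv x\prod_{a\neq0}(x-a)^{n_a}\pmod p$ satisfy $n_a\le 4$.
   Context: $Q_{k-1}(q)=q^{4k+4}-q^{4k+3}-q^{4k+2}-q^{4k+1}+q^3+q^2+q-1=(q^4-1)P_{k-1}(q)$ with $P_{k-1}(q)=1+\sum_{l=1}^{k} q^{4l-4}(q^4-q^3-q^2-q)$. $p_{k-1}(x)$ is the polynomial with $P_{k-1}(q)=q^{2k}p_{k-1}(q+q^{-1})$ (given by $p_0=x^2-x-3$, $p_1=(x^3-2x^2-3x+5)(x+1)$, $p_k=(x^2-2)p_{k-1}-p_{k-2}$), and $m_{k-1}$ is $p_{k-1}$ if $k\not\equiv2\pmod3$ and $p_{k-1}/(x+1)$ if $k\equiv2\pmod 3$. *)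

theory Defs
  imports "HOL-Computational_Algebra.Computational_Algebra" "Berlekamp_Zassenhaus.Finite_Field"
begin

text \<open>Qpoly k is Q_{k-1}(q) = q^(4k+4) - q^(4k+3) - q^(4k+2) - q^(4k+1) + q^3 + q^2 + q - 1.\<close>
definition Qpoly :: "nat \<Rightarrow> int poly" where
  "Qpoly k = Polynomial.monom 1 (4*k+4) - Polynomial.monom 1 (4*k+3) - Polynomial.monom 1 (4*k+2) - Polynomial.monom 1 (4*k+1)
             + Polynomial.monom 1 3 + Polynomial.monom 1 2 + Polynomial.monom 1 1 - 1"

text \<open>Ppoly k is P_{k-1}(q) = 1 + sum_{l=1}^k q^(4l-4) (q^4 - q^3 - q^2 - q).\<close>
definition Ppoly :: "nat \<Rightarrow> int poly" where
  "Ppoly k = 1 + (\<Sum>l=1..k. Polynomial.monom 1 (4*l-4) * [:0, -1, -1, -1, 1:])"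

fun psmall :: "nat \<Rightarrow> int poly" where
  "psmall 0 = [:-3, -1, 1:]"
| "psmall (Suc 0) = [:5, -3, -2, 1:] * [:1, 1:]"
| "psmall (Suc (Suc n)) = [:-2, 0, 1:] * psmall (Suc n) - psmall n"

definition msmall :: "nat \<Rightarrow> int poly" where
  "msmall k = (if k mod 3 = 2 then psmall (k-1) div [:1, 1:] else psmall (k-1))"

end

theory Submission imports Defs begin

lemma dvd_pderiv_step:
  fixes u F :: "'a::field poly"
  assumes "u ^ Suc n dvd F" shows "u ^ n dvd pderiv F"
proof -
  obtain G where G: "F = u ^ Suc n * G" using assms unfolding dvd_def by blast
  have "pderiv F = u ^ n * (Polynomial.smult (of_nat (Suc n)) (pderiv u * G) + u * pderiv G)"
    unfolding G pderiv_mult pderiv_power_Suc by (simp add: algebra_simps)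
  thus ?thesis by simp
qed

lemma dvd_pderiv_step':
  fixes u F :: "'a::field poly"
  assumes "u ^ m dvd F" "m = Suc n" shows "u ^ n dvd pderiv F"
  using assms dvd_pderiv_step by blast

lemma Q_shift_int:
  "[:0,1:] * Qpoly k = Polynomial.monom 1 (4*k+2) * [:-1,-1,-1,1:] + [:0,-1,1,1,1:]"
proof -
  have gen0: "\<And>x y::int poly. x*(y*x^4 - y*x^3 - y*x^2 - y*x + x^3+x^2+x-1) = (y*x^2)*(x^3-x^2-x-1) + (x^4+x^3+x^2-x)"
    by (simp add: algebra_simps power2_eq_square power3_eq_cube power4_eq_xxxx)
  have gen: "\<And>x::int poly. x * (x^(4*k+4) - x^(4*k+3) - x^(4*k+2) - x^(4*k+1) + x^3 + x^2 + x - 1)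
     = x^(4*k+2)*(x^3-x^2-x-1) + (x^4+x^3+x^2-x)"
    using gen0 by (simp only: power_add power_one_right)
  define x :: "int poly" where "x = [:0,1:]"
  have e1: "[:-1,-1,-1,1:] = x^3 - x^2 - x - 1" by (simp add: x_def numeral_eq_Suc one_pCons)
  have e2: "[:0,-1,1,1,1:] = x^4 + x^3 + x^2 - x" by (simp add: x_def numeral_eq_Suc one_pCons)
  have e3: "Qpoly k = x^(4*k+4) - x^(4*k+3) - x^(4*k+2) - x^(4*k+1) + x^3 + x^2 + x - 1"
    unfolding Qpoly_def monom_altdef x_def by simp
  show ?thesis unfolding e1 e2 e3 monom_altdef x_def[symmetric] using gen[of x] by simp
qed

lemma key:
  fixes u :: "'a::field poly"
  assumes c0: "of_nat (4*k+2) = (0::'a)" and c24: "(24::'a) \<noteq> 0"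
    and d: "u ^ 5 dvd map_poly of_int (Qpoly k)"
  shows "degree u = 0"
proof -
  define T :: "'a poly" where "T = Polynomial.monom 1 (4*k+2)"
  have T': "pderiv T = 0" unfolding T_def pderiv_monom using c0 by simp
  have sh: "[:0,1:] * map_poly of_int (Qpoly k) = T * [:-1,-1,-1,1:] + [:0,-1,1,1,1:]"
  proof -
    have "map_poly (of_int::int\<Rightarrow>'a) ([:0,1:] * Qpoly k) = T * [:-1,-1,-1,1:] + [:0,-1,1,1,1:]"
      unfolding Q_shift_int T_def by (simp only: hom_distribs) (simp add: map_poly_monom)
    moreover have "map_poly (of_int::int\<Rightarrow>'a) ([:0,1:] * Qpoly k) = [:0,1:] * map_poly of_int (Qpoly k)"
      by (simp only: of_int_poly_hom.hom_mult) simp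
    ultimately show ?thesis by simp
  qed
  have "u ^ 5 dvd T * [:-1,-1,-1,1:] + [:0,-1,1,1,1:]"
    using d sh by (metis dvd_mult2 mult.commute)
  hence "u ^ 4 dvd pderiv (T * [:-1,-1,-1,1:] + [:0,-1,1,1,1:])"
    by (rule dvd_pderiv_step') simp
  hence "u ^ 3 dvd pderiv (pderiv (T * [:-1,-1,-1,1:] + [:0,-1,1,1,1:]))"
    by (rule dvd_pderiv_step') simp
  hence "u ^ 2 dvd pderiv (pderiv (pderiv (T * [:-1,-1,-1,1:] + [:0,-1,1,1,1:])))"
    by (rule dvd_pderiv_step') simp
  hence "u ^ 1 dvd pderiv (pderiv (pderiv (pderiv (T * [:-1,-1,-1,1:] + [:0,-1,1,1,1:]))))"
    by (rule dvd_pderiv_step') simp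
  also have "pderiv (pderiv (pderiv (pderiv (T * [:-1,-1,-1,1:] + [:0,-1,1,1,1:])))) = [:24:]"
  proof -
    have TF: "\<And>F. pderiv (T*F) = T * pderiv F" using T' by (simp add: pderiv_mult)
    show ?thesis by (simp only: pderiv_add TF) (simp add: pderiv_pCons)
  qed
  finally have "u dvd [:24:]" by simp
  moreover have "[:24:] \<noteq> (0::'a poly)" using c24 by simp
  ultimately show ?thesis using divides_degree by fastforce
qed
lemma Qpoly_x: "Qpoly k = [:0,1:]^(4*k) * ([:0,1:]^4 - [:0,1:]^3 - [:0,1:]^2 - [:0,1:])
   + ([:0,1:]^3 + [:0,1:]^2 + [:0,1:] - 1)"
proof -
  define x :: "int poly" where "x = [:0,1:]"
  have g: "\<And>y :: int poly. y*x^4 - y*x^3 - y*x^2 - y*x^1 + x^3+x^2+x-1 = y * (x^4 - x^3 - x^2 - x) + (x^3+x^2+x-1)"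
    by (simp add: algebra_simps)
  have "Qpoly k = x^(4*k+4) - x^(4*k+3) - x^(4*k+2) - x^(4*k+1) + x^3 + x^2 + x - 1"
    unfolding Qpoly_def monom_altdef x_def by simp
  also have "\<dots> = x^(4*k) * (x^4 - x^3 - x^2 - x) + (x^3+x^2+x-1)"
    using g[of "x^(4*k)"] by (simp only: power_add)
  finally show ?thesis unfolding x_def .
qed

lemma Ppoly_Suc: "Ppoly (Suc k) = Ppoly k + [:0,1:]^(4*k) * [:0,-1,-1,-1,1:]"
  unfolding Ppoly_def by (simp add: monom_altdef)

lemma QP: "Qpoly k = [:-1,0,0,0,1:] * Ppoly k"
proof -
  define x :: "int poly" where "x = [:0,1:]"
  have e1: "[:-1,0,0,0,1:] = x^4 - 1" by (simp add: x_def numeral_eq_Suc one_pCons)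
  have e2: "[:0,-1,-1,-1,1:] = x^4 - x^3 - x^2 - x" by (simp add: x_def numeral_eq_Suc one_pCons)
  have Q: "Qpoly k = x^(4*k) * (x^4 - x^3 - x^2 - x) + (x^3+x^2+x-1)" for k
    unfolding Qpoly_x x_def ..
  have P: "Ppoly (Suc k) = Ppoly k + x^(4*k) * (x^4 - x^3 - x^2 - x)" for k
    unfolding Ppoly_Suc e2 x_def ..
  show ?thesis
  proof (induction k)
    case 0
    show ?case unfolding Q e1 by (simp add: Ppoly_def algebra_simps)
  next
    case (Suc k)
    have g: "\<And>y. x^4*y * (x^4 - x^3 - x^2 - x) + (x^3+x^2+x-1) = 
       (y * (x^4 - x^3 - x^2 - x) + (x^3+x^2+x-1)) + (x^4-1) * (y * (x^4 - x^3 - x^2 - x))"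
      by (simp add: algebra_simps)
    have "Qpoly (Suc k) = Qpoly k + (x^4-1) * (x^(4*k) * (x^4 - x^3 - x^2 - x))"
      unfolding Q using g[of "x^(4*k)"] by (simp add: power_add)
    also have "\<dots> = [:-1,0,0,0,1:] * Ppoly (Suc k)"
      unfolding Suc.IH P e1 by (simp add: algebra_simps)
    finally show ?case .
  qed
qed

lemma P_dvd_Q: "map_poly (of_int::int\<Rightarrow>'a::comm_ring_1) (Ppoly k) dvd map_poly of_int (Qpoly k)"
  unfolding QP of_int_poly_hom.hom_mult by (rule dvd_triv_right)

lemma keyP:
  fixes u :: "'a::field poly"
  assumes c0: "of_nat (4*k+2) = (0::'a)" and c24: "(24::'a) \<noteq> 0"
    and d: "u ^ 5 dvd map_poly of_int (Ppoly k)"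
  shows "degree u = 0"
  using key[OF c0 c24] d P_dvd_Q dvd_trans by blast

lemma char_facts:
  assumes "CHAR('a::field) = p" "prime p" "p > 3" "p dvd 2*k+1"
  shows "of_nat (4*k+2) = (0::'a)" "(24::'a) \<noteq> 0"
proof -
  have "p dvd 4*k+2" proof -
    have "4*k+2 = 2*(2*k+1)" by simp
    thus ?thesis using assms(4) by (metis dvd_mult)
  qed
  thus "of_nat (4*k+2) = (0::'a)" using assms(1) of_nat_eq_0_iff_char_dvd by metis
  have "\<not> p dvd 24"
  proof
    assume "p dvd 24"
    hence "p dvd 2^3 * 3" by simp
    hence "p dvd 2^3 \<or> p dvd 3" using assms(2) prime_dvd_mult_iff by blast
    hence "p dvd 2 \<or> p dvd 3" using assms(2) prime_dvd_power by blast
    thus False using assms(3) by (auto dest: dvd_imp_le)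
  qed
  hence "of_nat 24 \<noteq> (0::'a)" using assms(1) of_nat_eq_0_iff_char_dvd by metis
  thus "(24::'a) \<noteq> 0" by simp
qed

lemma part1:
  fixes x :: "'a::field"
  assumes c0: "of_nat (4*k+2) = (0::'a)" and c24: "(24::'a) \<noteq> 0"
  shows "Polynomial.order x (map_poly of_int (Qpoly k)) \<le> 4 \<and>
         Polynomial.order x (map_poly of_int (Ppoly k)) \<le> 4"
proof -
  have "\<not> 5 \<le> Polynomial.order x (map_poly of_int (Qpoly k))"
  proof
    assume "5 \<le> Polynomial.order x (map_poly of_int (Qpoly k))"
    hence "[:-x,1:]^5 dvd map_poly of_int (Qpoly k)"
      using order_1 power_le_dvd by blast
    from key[OF c0 c24 this] show False by simp
  qed
  moreover have "\<not> 5 \<le> Polynomial.order x (map_poly of_int (Ppoly k))"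
  proof
    assume "5 \<le> Polynomial.order x (map_poly of_int (Ppoly k))"
    hence "[:-x,1:]^5 dvd map_poly of_int (Ppoly k)"
      using order_1 power_le_dvd by blast
    from keyP[OF c0 c24 this] show False by simp
  qed
  ultimately show ?thesis by simp
qed

definition cf :: "'a::field \<Rightarrow> 'a poly fract" where "cf x = to_fract [:x:]"

interpretation cf: comm_ring_hom "cf :: 'a::field \<Rightarrow> 'a poly fract"
  by unfold_locales (simp_all add: cf_def flip: one_pCons to_fract_add to_fract_mult)

interpretation cfp: map_poly_comm_ring_hom "cf :: 'a::field \<Rightarrow> 'a poly fract" ..

interpretation tf: comm_ring_hom "to_fract :: 'a::idom \<Rightarrow> 'a fract"
  by unfold_locales simp_all

definition Xf :: "'a::field poly fract" where "Xf = to_fract [:0,1:]"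
definition Zf :: "'a::field poly fract" where "Zf = (1 + Xf^2) / Xf"
definition ev :: "'a::field poly \<Rightarrow> 'a poly fract" where "ev r = poly (map_poly cf r) Zf"

interpretation ev: comm_ring_hom "ev :: 'a::field poly \<Rightarrow> 'a poly fract"
  by unfold_locales (simp_all add: ev_def cfp.hom_add cfp.hom_mult)

lemma Xf_nz: "Xf \<noteq> 0" by (simp add: Xf_def)
lemma ev_x: "ev [:0,1:] = Zf" by (simp add: ev_def)
lemma ev_pCons: "ev (pCons c r) = cf c + Zf * ev r"
  by (simp add: ev_def hom_distribs)

lemma tf_smult: "to_fract (Polynomial.smult a p) = cf a * to_fract p"
  by (simp add: cf_def flip: to_fract_mult)

lemma exists_H:
  fixes r :: "'a::field poly"
  shows "degree r \<le> d \<Longrightarrow> \<exists>s. to_fract s = Xf^d * ev r"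
proof (induction r arbitrary: d rule: pCons_induct)
  case 0
  show ?case by (intro exI[of _ 0]) simp
next
  case (pCons a r)
  show ?case
  proof (cases "r = 0")
    case True
    have "to_fract ([:a:] * [:0,1:]^d) = Xf^d * ev (pCons a r)"
      using True by (simp add: ev_pCons tf.hom_power Xf_def tf_smult mult.commute)
    thus ?thesis by blast
  next
    case False
    then obtain d' where d: "d = Suc d'" "degree r \<le> d'" using pCons.prems
      by (cases d) auto
    obtain s' where s': "to_fract s' = Xf^d' * ev r" using pCons.IH[OF d(2)] by blast
    have "to_fract ([:a:] * [:0,1:]^d + (1 + [:0,1:]^2) * s') = cf a * Xf^d + (1 + Xf^2) * (Xf^d' * ev r)"
      by (simp add: tf.hom_power s' Xf_def tf_smult)
    also have "\<dots> = cf a * Xf^d + (Xf * Zf) * (Xf^d' * ev r)"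
      using Xf_nz by (auto simp add: Zf_def)
    also have "\<dots> = Xf^d * ev (pCons a r)"
      by (simp add: ev_pCons d(1) algebra_simps)
    finally show ?thesis by blast
  qed
qed


lemma xforms:
  "Ppoly 0 = 1"
  "Ppoly (Suc k) = Ppoly k + [:0,1:]^(4*k) * ([:0,1:]^4 - [:0,1:]^3 - [:0,1:]^2 - [:0,1:])"
  "psmall 0 = [:0,1:]^2 - [:0,1:] - 3"
  "psmall (Suc 0) = ([:0,1:]^3 - 2*[:0,1:]^2 - 3*[:0,1:] + 5) * ([:0,1:] + 1)"
  "psmall (Suc (Suc n)) = ([:0,1:]^2 - 2) * psmall (Suc n) - psmall n"
proof -
  define x :: "int poly" where "x = [:0,1:]"
  have e2: "[:0,-1,-1,-1,1:] = x^4 - x^3 - x^2 - x" by (simp add: x_def numeral_eq_Suc one_pCons numeral_poly)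
  have e3: "[:-3,-1,1:] = x^2 - x - 3" by (simp add: x_def numeral_eq_Suc one_pCons numeral_poly)
  have e4: "[:5,-3,-2,1:] = x^3 - 2*x^2 - 3*x + 5" by (simp add: x_def numeral_eq_Suc one_pCons numeral_poly)
  have e5: "[:1,1:] = x + 1" by (simp add: x_def numeral_eq_Suc one_pCons numeral_poly)
  have e6: "[:-2,0,1:] = x^2 - 2" by (simp add: x_def numeral_eq_Suc one_pCons numeral_poly)
  show "Ppoly 0 = 1" by (simp add: Ppoly_def)
  show "Ppoly (Suc k) = Ppoly k + [:0,1:]^(4*k) * ([:0,1:]^4 - [:0,1:]^3 - [:0,1:]^2 - [:0,1:])"
    unfolding Ppoly_Suc e2 x_def ..
  show "psmall 0 = [:0,1:]^2 - [:0,1:] - 3" using e3 by (simp add: x_def)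
  show "psmall (Suc 0) = ([:0,1:]^3 - 2*[:0,1:]^2 - 3*[:0,1:] + 5) * ([:0,1:] + 1)"
    using e4 e5 by (simp only: psmall.simps x_def)
  show "psmall (Suc (Suc n)) = ([:0,1:]^2 - 2) * psmall (Suc n) - psmall n"
    using e6 by (simp only: psmall.simps x_def)
qed

lemma fid0: "(X::'b::field) \<noteq> 0 \<Longrightarrow>
   1 + (X^4 - X^3 - X^2 - X) = X^2 * (((1 + X^2)/X)^2 - ((1 + X^2)/X) - 3)"
  by (simp add: field_simps power2_eq_square power3_eq_cube power4_eq_xxxx)

lemma fid1: "(X::'b::field) \<noteq> 0 \<Longrightarrow>
   1 + (X^4 - X^3 - X^2 - X) + X^4 * (X^4 - X^3 - X^2 - X) = X^4 * ((((1 + X^2)/X)^3 - 2*((1 + X^2)/X)^2 - 3*((1 + X^2)/X) + 5) * (((1 + X^2)/X) + 1))"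
  by (simp add: field_simps power2_eq_square power3_eq_cube power4_eq_xxxx)

lemma fid2: "(X::'b::field) \<noteq> 0 \<Longrightarrow>
   t*X^2*E1 + X^4*(t*X^2*E1 - t*E0) = t*X^4*((((1 + X^2)/X)^2 - 2)*E1 - E0)"
  by (simp add: field_simps power2_eq_square power3_eq_cube power4_eq_xxxx)

lemma lemB:
  "to_fract (of_int_poly (Ppoly (Suc n)) :: 'a::field poly) = Xf^(2*n+2) * ev (of_int_poly (psmall n) :: 'a poly)"
proof (induction n rule: psmall.induct)
  case 1
  have hP: "Ppoly (Suc 0) = 1 + ([:0,1:]^4 - [:0,1:]^3 - [:0,1:]^2 - [:0,1:])"
    using xforms(2)[of 0] by (simp only: xforms(1)) simp
  show ?case unfolding hP xforms(3)
    apply (simp only: hom_distribs)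
    apply (simp add: Xf_def[symmetric] ev_x)
    using fid0[OF Xf_nz, folded Zf_def] by (simp add: power2_eq_square)
next
  case 2
  have hP: "Ppoly (Suc (Suc 0)) = 1 + ([:0,1:]^4 - [:0,1:]^3 - [:0,1:]^2 - [:0,1:]) + [:0,1:]^4 * ([:0,1:]^4 - [:0,1:]^3 - [:0,1:]^2 - [:0,1:])"
    using xforms(2)[of 0] xforms(2)[of 1] by (simp only: xforms(1)) simp
  show ?case unfolding hP xforms(4)
    apply (simp only: hom_distribs)
    apply (simp add: Xf_def[symmetric] ev_x)
    using fid1[OF Xf_nz, folded Zf_def] by (simp add: power2_eq_square distrib_left)
next
  case (3 n)
  define t :: "'a poly fract" where "t = Xf^(2*n+2)"
  define E1 where "E1 = ev (of_int_poly (psmall (Suc n)) :: 'a poly)"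
  define E0 where "E0 = ev (of_int_poly (psmall n) :: 'a poly)"
  have A: "to_fract (of_int_poly (Ppoly (Suc (Suc n))) :: 'a poly) = t*Xf^2*E1"
    using 3(1) by (simp add: t_def E1_def power_add mult_ac power2_eq_square)
  have B: "to_fract (of_int_poly (Ppoly (Suc n)) :: 'a poly) = t*E0"
    using 3(2) by (simp add: t_def E0_def)
  have PP: "Ppoly (Suc (Suc (Suc n))) = Ppoly (Suc (Suc n)) + [:0,1:]^4 * (Ppoly (Suc (Suc n)) - Ppoly (Suc n))"
  proof -
    have e: "4*Suc(Suc n) = 4 + 4*Suc n" by simp
    have h1: "Ppoly (Suc (Suc (Suc n))) = Ppoly (Suc (Suc n)) + [:0,1:]^4 * ([:0,1:]^(4*Suc n) * ([:0,1:]^4 - [:0,1:]^3 - [:0,1:]^2 - [:0,1:]))"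
      using xforms(2)[of "Suc (Suc n)"] unfolding e power_add mult.assoc .
    have gl: "\<And>a b c u w :: int poly. a = b + u*w \<Longrightarrow> b = c + w \<Longrightarrow> a = b + u*(b - c)" by simp
    show ?thesis by (rule gl[OF h1 xforms(2)[of "Suc n"]])
  qed
  have "to_fract (of_int_poly (Ppoly (Suc (Suc (Suc n)))) :: 'a poly) = t*Xf^2*E1 + Xf^4*(t*Xf^2*E1 - t*E0)"
    unfolding PP by (simp only: hom_distribs A B) (simp add: Xf_def)
  also have "\<dots> = t*Xf^4*((Zf^2 - 2)*E1 - E0)"
    by (rule fid2[OF Xf_nz, folded Zf_def])
  also have "\<dots> = Xf^(2*Suc (Suc n)+2) * ev (of_int_poly (psmall (Suc (Suc n))) :: 'a poly)"
    unfolding xforms(5) t_def E1_def E0_def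
    apply (simp only: hom_distribs)
    apply (simp add: ev_x power_add mult_ac power4_eq_xxxx)
    done
  finally show ?case .
qed


lemma degree_psmall: "degree (psmall n) \<le> 2*n+2"
proof (induction n rule: psmall.induct)
  case 1 show ?case by simp
next
  case 2
  have "degree ([:5, -3, -2, 1:] * [:1, 1:] :: int poly) \<le> 3 + 1"
    by (rule order.trans[OF degree_mult_le]) simp
  thus ?case by simp
next
  case (3 n)
  have "degree ([:-2, 0, 1:] * psmall (Suc n)) \<le> 2 + (2*Suc n + 2)"
    by (rule order.trans[OF degree_mult_le]) (use 3(1) in simp)
  moreover have "degree (psmall n) \<le> 2 * Suc (Suc n) + 2" using 3(2) by simp
  ultimately have "degree ([:-2, 0, 1:] * psmall (Suc n) - psmall n) \<le> 2 * Suc (Suc n) + 2"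
    by (intro degree_diff_le) simp_all
  thus ?case by (simp only: psmall.simps(3))
qed

lemma psmall_m1: "poly (psmall n) (-1) = (if n mod 3 = 0 then -1 else if n mod 3 = 1 then 0 else 1)"
proof (induction n rule: psmall.induct)
  case 1 show ?case by simp
next
  case 2 show ?case by simp
next
  case (3 n)
  have rec: "poly (psmall (Suc (Suc n))) (-1) = - poly (psmall (Suc n)) (-1) - poly (psmall n) (-1)"
    by simp
  have "n mod 3 = 0 \<or> n mod 3 = 1 \<or> n mod 3 = 2" by auto
  then show ?case
  proof (elim disjE)
    assume h: "n mod 3 = 0"
    have "Suc n mod 3 = 1" "Suc (Suc n) mod 3 = 2" using h by presburger+
    thus ?case unfolding rec 3(1) 3(2) using h by simp
  next
    assume h: "n mod 3 = 1"
    have "Suc n mod 3 = 2" "Suc (Suc n) mod 3 = 0" using h by presburger+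
    thus ?case unfolding rec 3(1) 3(2) using h by simp
  next
    assume h: "n mod 3 = 2"
    have "Suc n mod 3 = 0" "Suc (Suc n) mod 3 = 1" using h by presburger+
    thus ?case unfolding rec 3(1) 3(2) using h by simp
  qed
qed

lemma part2:
  fixes a :: "'a::field"
  assumes c0: "of_nat (4*k+2) = (0::'a)" and c24: "(24::'a) \<noteq> 0" and k: "k \<ge> 3"
  shows "\<not> [:-a,1:]^5 dvd (of_int_poly (psmall (k-1)) :: 'a poly)"
proof
  assume "[:-a,1:]^5 dvd (of_int_poly (psmall (k-1)) :: 'a poly)"
  then obtain r where r: "(of_int_poly (psmall (k-1)) :: 'a poly) = [:-a,1:]^5 * r"
    unfolding dvd_def by blast
  have dps: "degree (of_int_poly (psmall (k-1)) :: 'a poly) \<le> 2*k"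
  proof -
    have "2*(k-1)+2 = 2*k" using k by simp
    thus ?thesis using degree_map_poly_le[of "of_int :: int \<Rightarrow> 'a" "psmall (k-1)"] degree_psmall[of "k-1"] by linarith
  qed
  have dr: "degree r \<le> 2*k - 5"
  proof (cases "r = 0")
    case False
    have "degree ([:-a,1:]^5 * r) = 5 + degree r"
      using False by (simp add: degree_mult_eq degree_power_eq)
    thus ?thesis using dps r by simp
  qed simp
  obtain s where s: "to_fract s = Xf^(2*k-5) * ev r" using exists_H[OF dr] by blast
  have kk: "Suc (k-1) = k" "2*(k-1)+2 = 2*k" "2*k = 5 + (2*k-5)" using k by auto
  have eva: "Xf * ev [:-a,1:] = 1 + Xf^2 - cf a * Xf"
  proof -
    have XZ: "Xf * Zf = 1 + Xf^2" using Xf_nz by (auto simp: Zf_def)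
    have "ev [:-a,1:] = Zf - cf a" by (simp add: ev_pCons cf.hom_uminus)
    hence "Xf * ev [:-a,1:] = Xf * Zf - cf a * Xf" by (simp add: right_diff_distrib mult.commute)
    thus ?thesis unfolding XZ .
  qed
  have "to_fract (of_int_poly (Ppoly k) :: 'a poly) = Xf^(2*k) * ev (of_int_poly (psmall (k-1)) :: 'a poly)"
    using lemB[of "k-1", where 'a='a] unfolding kk(1,2) .
  also have "\<dots> = (Xf * ev [:-a,1:])^5 * (Xf^(2*k-5) * ev r)"
    unfolding r ev.hom_mult ev.hom_power by (subst kk(3)) (simp only: power_add power_mult_distrib mult_ac)
  also have "\<dots> = to_fract ([:1,-a,1:]^5 * s)"
  proof -
    have "[:1,-a,1:] = 1 + [:0,1:]^2 - Polynomial.smult a [:0,1:]" by (simp add: one_pCons power2_eq_square)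
    hence "to_fract [:1,-a,1:] = 1 + Xf^2 - cf a * Xf"
      by (simp only: tf.hom_add tf.hom_minus tf.hom_power tf_smult tf.hom_one Xf_def)
    thus ?thesis unfolding eva tf.hom_mult tf.hom_power s by simp
  qed
  finally have "(of_int_poly (Ppoly k) :: 'a poly) = [:1,-a,1:]^5 * s"
    unfolding to_fract_eq_iff .
  hence "[:1,-a,1:]^5 dvd (of_int_poly (Ppoly k) :: 'a poly)" by simp
  hence "degree [:1,-a,1:] = 0" by (rule keyP[OF c0 c24])
  thus False by simp
qed


lemma msmall_dvd: "(of_int_poly (msmall k) :: 'a::comm_ring_1 poly) dvd of_int_poly (psmall (k-1))"
proof (cases "k mod 3 = 2")
  case True
  have "k = 3*(k div 3) + 2" using True div_mult_mod_eq[of k 3] by linarith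
  hence "k - 1 = 3*(k div 3) + 1" by simp
  hence "(k-1) mod 3 = 1" by simp
  hence "poly (psmall (k-1)) (-1) = 0" by (simp add: psmall_m1)
  hence d: "[:1,1:] dvd psmall (k-1)" using poly_eq_0_iff_dvd[of "psmall (k-1)" "-1"] by simp
  have m: "msmall k = psmall (k-1) div [:1,1:]" using True unfolding msmall_def by (rule if_P)
  have "psmall (k-1) = msmall k * [:1,1:]" unfolding m using dvd_div_mult_self[OF d] by simp
  hence "(of_int_poly (psmall (k-1)) :: 'a poly) = of_int_poly (msmall k) * of_int_poly [:1,1:]"
    by (simp only: of_int_poly_hom.hom_mult[symmetric])
  thus ?thesis by (metis dvd_triv_left)
next
  case False
  thus ?thesis by (simp add: msmall_def)
qed

theorem mainTheorem12:
  fixes k p :: nat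
  assumes "k \<ge> 3" and "prime p" and "p > 3" and "p dvd 2*k+1"
  shows "(\<forall>(x::'a::alg_closed_field). CHAR('a) = p \<longrightarrow>
            Polynomial.order x (map_poly of_int (Qpoly k)) \<le> 4 \<and>
            Polynomial.order x (map_poly of_int (Ppoly k)) \<le> 4)
       \<and> (CARD('p::prime_card) = p \<longrightarrow>
            (\<forall>a::'p mod_ring. \<not> [:-a, 1:]^5 dvd map_poly of_int (psmall (k-1)))
          \<and> (\<forall>n :: 'p mod_ring \<Rightarrow> nat.
               map_poly of_int (msmall k) = [:0, 1:] * (\<Prod>a\<in>{a. a \<noteq> 0}. [:-a, 1:] ^ n a)
               \<longrightarrow> (\<forall>a. a \<noteq> 0 \<longrightarrow> n a \<le> 4)))"
proof (rule conjI)
  show "\<forall>(x::'a::alg_closed_field). CHAR('a) = p \<longrightarrow>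
            Polynomial.order x (map_poly of_int (Qpoly k)) \<le> 4 \<and>
            Polynomial.order x (map_poly of_int (Ppoly k)) \<le> 4"
  proof (intro allI impI)
    fix x :: "'a::alg_closed_field"
    assume "CHAR('a) = p"
    note cf = char_facts[OF this assms(2-4)]
    show "Polynomial.order x (map_poly of_int (Qpoly k)) \<le> 4 \<and>
            Polynomial.order x (map_poly of_int (Ppoly k)) \<le> 4"
      by (rule part1[OF cf])
  qed
next
  show "CARD('p::prime_card) = p \<longrightarrow>
            (\<forall>a::'p mod_ring. \<not> [:-a, 1:]^5 dvd map_poly of_int (psmall (k-1)))
          \<and> (\<forall>n :: 'p mod_ring \<Rightarrow> nat.
               map_poly of_int (msmall k) = [:0, 1:] * (\<Prod>a\<in>{a. a \<noteq> 0}. [:-a, 1:] ^ n a)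
               \<longrightarrow> (\<forall>a. a \<noteq> 0 \<longrightarrow> n a \<le> 4))"
  proof
    assume card: "CARD('p::prime_card) = p"
    have "CHAR('p mod_ring) = p" using card by simp
    note cf = char_facts[OF this assms(2-4)]
    have A: "\<forall>a::'p mod_ring. \<not> [:-a, 1:]^5 dvd map_poly of_int (psmall (k-1))"
      using part2[OF cf assms(1)] by blast
    have B: "n a \<le> 4"
      if eq: "map_poly of_int (msmall k) = [:0, 1:] * (\<Prod>a\<in>{a. a \<noteq> 0}. [:-a, 1:] ^ n a)"
      and a: "a \<noteq> 0" for n :: "'p mod_ring \<Rightarrow> nat" and a :: "'p mod_ring"
    proof (rule ccontr)
      assume "\<not> n a \<le> 4"
      hence "5 \<le> n a" by simp
      hence "[:-a,1:]^5 dvd [:-a,1:]^(n a)" by (rule le_imp_power_dvd)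
      also have "[:-a,1:]^(n a) dvd (\<Prod>a\<in>{a. a \<noteq> 0}. [:-a, 1:] ^ n a)"
        by (rule dvd_prodI) (use a in auto)
      also have "\<dots> dvd map_poly of_int (msmall k)" unfolding eq by (rule dvd_triv_right)
      also have "\<dots> dvd map_poly of_int (psmall (k-1))" by (rule msmall_dvd)
      finally show False using A by blast
    qed
    show "(\<forall>a::'p mod_ring. \<not> [:-a, 1:]^5 dvd map_poly of_int (psmall (k-1)))
          \<and> (\<forall>n :: 'p mod_ring \<Rightarrow> nat.
               map_poly of_int (msmall k) = [:0, 1:] * (\<Prod>a\<in>{a. a \<noteq> 0}. [:-a, 1:] ^ n a)
               \<longrightarrow> (\<forall>a. a \<noteq> 0 \<longrightarrow> n a \<le> 4))"
      using A B by blast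
  qed
qed

end
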